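(* Let $\mathcal F$ be the fermionic Fock space generated from a unit vector $\Omega_0$ (the non-interacting vacuum) by operators $b_n, c_n$ ($n\in\mathbb Z$) satisfying the canonical anticommutation relations $\{b_n,b_{n'}^\dagger\}=\{c_n,c_{n'}^\dagger\}=\delta_{nn'}$ (all other anticommutators among $b_n,b_n^\dagger,c_n,c_n^\dagger$ vanishing) and $b_n\Omega_0=c_n\Omega_0=0$ for all $n$. Let $\mathcal H_0\subset\mathcal F$ be the zero-charge subspace (defined in the context). For $P\in\mathbb Z$ let $\Omega_P$ be the unexcited states: $\Omega_0$ is the vacuum, and $$\Omega_P=\prod_{i=0}^{P-1}\bigl(b_i^\dagger c_{-i}^\dagger\bigr)\Omega_0\quad (P\ge 1),\qquad \Omega_P=\prod_{i=1}^{-P}\bigl(b_{-i}^\dagger c_{i}^\dagger\bigr)\Omega_0\quad (P\le -1).$$ Then there is a unitary operator $\mathbf\Gamma$ on $\mathcal F$, determined by the relations $$\mathbf\Gamma\Omega_0=b_{-1}^\dagger c_1^\dagger\Omega_0,$$ $$\mathbf\Gamma b_n\mathbf\Gamma^{-1}=b_{n-1},\ \ \mathbf\Gamma c_n\mathbf\Gamma^{-1}=c_{n+1}\ (n\neq0),\qquad \mathbf\Gamma b_0\mathbf\Gamma^{-1}=c_1^\dagger,\ \ \mathbf\Gamma c_0\mathbf\Gamma^{-1}=b_{-1}^\dagger,$$ $$\mathbf\Gamma b_n^\dagger\mathbf\Gamma^{-1}=b_{n-1}^\dagger,\ \ \mathbf\Gamma c_n^\dagger\mathbf\Gamma^{-1}=c_{n+1}^\dagger\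 (n\neq0),\qquad \mathbf\Gamma b_0^\dagger\mathbf\Gamma^{-1}=c_1,\ \ \mathbf\Gamma c_0^\dagger\mathbf\Gamma^{-1}=b_{-1},$$ which maps $\mathcal H_0$ onto itself, so that $N\mapsto\mathbf\Gamma^N|_{\mathcal H_0}$ is a unitary action of the group $\mathbb Z$ on $\mathcal H_0$. Moreover $\mathbf\Gamma\Omega_P=\Omega_{P-1}$ and $\mathbf\Gamma^{-1}\Omega_P=\Omega_{P+1}$ for all $P\in\mathbb Z$ (in particular $\mathbf\Gamma^{-1}\Omega_0=b_0^\dagger c_0^\dagger\Omega_0$), and $\mathbf\Gamma^{-1}$ acts by the inverse relations.
   Context: For finite subsets $\mathbf m=\{m_1<\dots<m_M\}$ and $\mathbf n=\{n_1<\dots<n_N\}$ of $\mathbb Z$, the vectors $\Omega_{\mathbf m,\mathbf n}=b_{m_1}^\dagger\cdots b_{m_M}^\dagger c_{n_1}^\dagger\cdots c_{n_N}^\dagger\Omega_0$ form an orthonormal basis of $\mathcal F$. The zero-charge Fock space $\mathcal H_0$ is the closed linear span of those $\Omega_{\mathbf m,\mathbf n}$ with $|\mathbf m|=|\mathbf n|$ (equal numbers of fermions $b^\dagger$ and antifermions $c^\dagger$). The factors $b_i^\dagger c_{-i}^\dagger$ in the definition of $\Omega_P$ are products of two fermionic operators and hence commute with one another, so the order of the product is immaterial. This large gauge transformation $\mathbf\Gamma$ corresponds to the gauge transformation $x\mapsto e^{2\pi i x/L}$ on the circle of length $L$. *)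

theory Defs
  imports "HOL-Analysis.Analysis"
begin

text \<open>Concrete model of the fermionic Fock space: a vector is given by its
coefficients with respect to the orthonormal basis Omega_{m,n}, indexed by pairs
(m,n) of finite subsets of the integers (m = occupied fermion modes b, n = occupied
antifermion modes c).\<close>

type_synonym fvec = "int set \<times> int set \<Rightarrow> complex"

definition fock_space :: "fvec set" where
  "fock_space = {f. (\<forall>m n. f (m, n) \<noteq> 0 \<longrightarrow> finite m \<and> finite n)
                    \<and> (\<lambda>p. (cmod (f p))^2) summable_on UNIV}"

definition fock_norm :: "fvec \<Rightarrow> real" where
  "fock_norm f = sqrt (infsum (\<lambda>p. (cmod (f p))^2) UNIV)"

definition basis_vec :: "int set \<Rightarrow> int set \<Rightarrow> fvec" where
  "basis_vec m n = (\<lambda>p. if p = (m, n) then 1 else 0)"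

definition vac :: fvec where
  "vac = basis_vec {} {}"

text \<open>Creation / annihilation operators, with the sign convention
Omega_{m,n} = b^dag_{m_1} ... b^dag_{m_M} c^dag_{n_1} ... c^dag_{n_N} Omega_0
(m_1 < ... < m_M, n_1 < ... < n_N).\<close>
definition bdag :: "int \<Rightarrow> fvec \<Rightarrow> fvec" where
  "bdag k f = (\<lambda>(m, n). if k \<in> m then (-1) ^ card {i\<in>m. i < k} * f (m - {k}, n) else 0)"

definition bann :: "int \<Rightarrow> fvec \<Rightarrow> fvec" where
  "bann k f = (\<lambda>(m, n). if k \<notin> m then (-1) ^ card {i\<in>m. i < k} * f (insert k m, n) else 0)"

definition cdag :: "int \<Rightarrow> fvec \<Rightarrow> fvec" where
  "cdag k f = (\<lambda>(m, n). if k \<in> n then (-1) ^ (card m + card {j\<in>n. j < k}) * f (m, n - {k}) else 0)"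

definition cann :: "int \<Rightarrow> fvec \<Rightarrow> fvec" where
  "cann k f = (\<lambda>(m, n). if k \<notin> n then (-1) ^ (card m + card {j\<in>n. j < k}) * f (m, insert k n) else 0)"

definition zero_charge :: "fvec set" where
  "zero_charge = {f \<in> fock_space. \<forall>m n. f (m, n) \<noteq> 0 \<longrightarrow> card m = card n}"

fun omega_pos :: "nat \<Rightarrow> fvec" where
  "omega_pos 0 = vac"
| "omega_pos (Suc k) = bdag (int k) (cdag (- int k) (omega_pos k))"

fun omega_neg :: "nat \<Rightarrow> fvec" where
  "omega_neg 0 = vac"
| "omega_neg (Suc k) = bdag (- int (Suc k)) (cdag (int (Suc k)) (omega_neg k))"

definition Omega :: "int \<Rightarrow> fvec" where
  "Omega P = (if P \<ge> 0 then omega_pos (nat P) else omega_neg (nat (- P)))"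

definition fock_unitary :: "(fvec \<Rightarrow> fvec) \<Rightarrow> bool" where
  "fock_unitary U \<longleftrightarrow>
     U ` fock_space = fock_space
   \<and> (\<forall>f\<in>fock_space. \<forall>g\<in>fock_space. \<forall>a::complex.
        U (\<lambda>p. a * f p + g p) = (\<lambda>p. a * U f p + U g p))
   \<and> (\<forall>f\<in>fock_space. fock_norm (U f) = fock_norm f)"

text \<open>Since Gamma is a bijection of the Fock space and the b, c operators preserve it,
Gamma X Gamma^{-1} = Y is written as Gamma X = Y Gamma on the Fock space.\<close>
definition gamma_relations :: "(fvec \<Rightarrow> fvec) \<Rightarrow> bool" where
  "gamma_relations G \<longleftrightarrow>
     G vac = bdag (-1) (cdag 1 vac)
   \<and> (\<forall>n. \<forall>f\<in>fock_space. n \<noteq> 0 \<longrightarrow>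
        G (bann n f) = bann (n - 1) (G f) \<and> G (cann n f) = cann (n + 1) (G f)
      \<and> G (bdag n f) = bdag (n - 1) (G f) \<and> G (cdag n f) = cdag (n + 1) (G f))
   \<and> (\<forall>f\<in>fock_space.
        G (bann 0 f) = cdag 1 (G f) \<and> G (cann 0 f) = bdag (-1) (G f)
      \<and> G (bdag 0 f) = cann 1 (G f) \<and> G (cdag 0 f) = bann (-1) (G f))"

definition gamma_inv_relations :: "(fvec \<Rightarrow> fvec) \<Rightarrow> bool" where
  "gamma_inv_relations H \<longleftrightarrow>
     H vac = bdag 0 (cdag 0 vac)
   \<and> (\<forall>n. \<forall>f\<in>fock_space. n \<noteq> -1 \<longrightarrow>
        H (bann n f) = bann (n + 1) (H f) \<and> H (bdag n f) = bdag (n + 1) (H f))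
   \<and> (\<forall>n. \<forall>f\<in>fock_space. n \<noteq> 1 \<longrightarrow>
        H (cann n f) = cann (n - 1) (H f) \<and> H (cdag n f) = cdag (n - 1) (H f))
   \<and> (\<forall>f\<in>fock_space.
        H (cdag 1 f) = bann 0 (H f) \<and> H (bdag (-1) f) = cann 0 (H f)
      \<and> H (cann 1 f) = bdag 0 (H f) \<and> H (bann (-1) f) = cdag 0 (H f))"

end

theory Submission
  imports Defs
begin


definition bm :: "int set \<Rightarrow> int set \<Rightarrow> int set" where
  "bm m n = (if 0 \<in> n then (\<lambda>i. i - 1) ` (m - {0}) else insert (-1) ((\<lambda>i. i - 1) ` (m - {0})))"
definition cm :: "int set \<Rightarrow> int set \<Rightarrow> int set" where
  "cm m n = (if 0 \<in> m then (\<lambda>j. j + 1) ` (n - {0}) else insert 1 ((\<lambda>j. j + 1) ` (n - {0})))"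
definition ta :: "int set \<Rightarrow> int set \<Rightarrow> int set" where
  "ta m' n' = (if 1 \<in> n' then (\<lambda>i. i + 1) ` (m' - {-1}) else insert 0 ((\<lambda>i. i + 1) ` (m' - {-1})))"
definition tb :: "int set \<Rightarrow> int set \<Rightarrow> int set" where
  "tb m' n' = (if -1 \<in> m' then (\<lambda>j. j - 1) ` (n' - {1}) else insert 0 ((\<lambda>j. j - 1) ` (n' - {1})))"

definition sig :: "int set \<times> int set \<Rightarrow> int set \<times> int set" where
  "sig p = (bm (fst p) (snd p), cm (fst p) (snd p))"
definition tau :: "int set \<times> int set \<Rightarrow> int set \<times> int set" where
  "tau q = (ta (fst q) (snd q), tb (fst q) (snd q))"

lemma mem_img_m1[simp]: "x \<in> (\<lambda>i::int. i - 1) ` S \<longleftrightarrow> x + 1 \<in> S"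
  by (auto simp: image_iff) (metis add_diff_cancel_right')
lemma mem_img_p1[simp]: "x \<in> (\<lambda>i::int. i + 1) ` S \<longleftrightarrow> x - 1 \<in> S"
  by (auto simp: image_iff) (metis diff_add_cancel)

lemma bm_mem: "x \<in> bm m n \<longleftrightarrow> (x \<noteq> -1 \<and> x + 1 \<in> m) \<or> (x = -1 \<and> 0 \<notin> n)"
  unfolding bm_def by auto
lemma cm_mem: "x \<in> cm m n \<longleftrightarrow> (x \<noteq> 1 \<and> x - 1 \<in> n) \<or> (x = 1 \<and> 0 \<notin> m)"
  unfolding cm_def by auto
lemma ta_mem: "x \<in> ta m n \<longleftrightarrow> (x \<noteq> 0 \<and> x - 1 \<in> m) \<or> (x = 0 \<and> 1 \<notin> n)"
  unfolding ta_def by auto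
lemma tb_mem: "x \<in> tb m n \<longleftrightarrow> (x \<noteq> 0 \<and> x + 1 \<in> n) \<or> (x = 0 \<and> -1 \<notin> m)"
  unfolding tb_def by auto

lemma tau_sig[simp]: "tau (sig p) = p"
proof -
  obtain m n where p: "p = (m, n)" by force
  have "ta (bm m n) (cm m n) = m" by (auto simp: ta_mem bm_mem cm_mem eq_neg_iff_add_eq_0[symmetric])
  moreover have "tb (bm m n) (cm m n) = n" by (auto simp: tb_mem bm_mem cm_mem)
  ultimately show ?thesis by (simp add: p sig_def tau_def)
qed

lemma sig_tau[simp]: "sig (tau q) = q"
proof -
  obtain m n where p: "q = (m, n)" by force
  have "bm (ta m n) (tb m n) = m" by (auto simp: ta_mem bm_mem tb_mem eq_neg_iff_add_eq_0[symmetric])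
  moreover have "cm (ta m n) (tb m n) = n" by (auto simp: tb_mem cm_mem ta_mem eq_neg_iff_add_eq_0[symmetric])
  ultimately show ?thesis by (simp add: p sig_def tau_def)
qed

lemma sig_inj: "sig p = sig p' \<longleftrightarrow> p = p'"
  by (metis tau_sig)

lemma bij_sig: "bij sig"
  by (metis bij_betw_byWitness subset_UNIV tau_sig sig_tau image_subset_iff  UNIV_I)

lemma finite_bm[simp]: "finite (bm m n) \<longleftrightarrow> finite m"
proof -
  have "finite (m - {0}) \<longleftrightarrow> finite ((\<lambda>i::int. i - 1) ` (m - {0}))"
    by (rule finite_image_iff[symmetric]) (auto simp: inj_on_def)
  then show ?thesis unfolding bm_def by auto
qed
lemma finite_cm[simp]: "finite (cm m n) \<longleftrightarrow> finite n"
proof -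
  have "finite (n - {0}) \<longleftrightarrow> finite ((\<lambda>i::int. i + 1) ` (n - {0}))"
    by (rule finite_image_iff[symmetric]) (auto simp: inj_on_def)
  then show ?thesis unfolding cm_def by auto
qed

lemma bm_diff: "k \<noteq> 0 \<Longrightarrow> bm (m - {k}) n = bm m n - {k - 1}" by (auto simp: bm_mem)
lemma bm_ins: "k \<noteq> 0 \<Longrightarrow> bm (insert k m) n = insert (k - 1) (bm m n)" by (auto simp: bm_mem)
lemma cm_diffm: "k \<noteq> 0 \<Longrightarrow> cm (m - {k}) n = cm m n" by (auto simp: cm_mem)
lemma cm_insm: "k \<noteq> 0 \<Longrightarrow> cm (insert k m) n = cm m n" by (auto simp: cm_mem)
lemma bm_diffn: "k \<noteq> 0 \<Longrightarrow> bm m (n - {k}) = bm m n" by (auto simp: bm_mem)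
lemma bm_insn: "k \<noteq> 0 \<Longrightarrow> bm m (insert k n) = bm m n" by (auto simp: bm_mem)
lemma cm_diff: "k \<noteq> 0 \<Longrightarrow> cm m (n - {k}) = cm m n - {k + 1}" by (auto simp: cm_mem)
lemma cm_ins: "k \<noteq> 0 \<Longrightarrow> cm m (insert k n) = insert (k + 1) (cm m n)" by (auto simp: cm_mem)
lemma bm_diff0: "bm (m - {0}) n = bm m n" by (auto simp: bm_mem)
lemma bm_ins0: "bm (insert 0 m) n = bm m n" by (auto simp: bm_mem)
lemma cm_diff0: "cm (m - {0}) n = insert 1 (cm m n)" by (auto simp: cm_mem)
lemma cm_ins0: "cm (insert 0 m) n = cm m n - {1}" by (auto simp: cm_mem)
lemma cm_diffn0: "cm m (n - {0}) = cm m n" by (auto simp: cm_mem)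
lemma cm_insn0: "cm m (insert 0 n) = cm m n" by (auto simp: cm_mem)
lemma bm_diffn0: "bm m (n - {0}) = insert (-1) (bm m n)" by (auto simp: bm_mem)
lemma bm_insn0: "bm m (insert 0 n) = bm m n - {-1}" by (auto simp: bm_mem)

lemma bm_memk: "k \<noteq> 0 \<Longrightarrow> k - 1 \<in> bm m n \<longleftrightarrow> k \<in> m" by (auto simp: bm_mem)
lemma cm_memk: "k \<noteq> 0 \<Longrightarrow> k + 1 \<in> cm m n \<longleftrightarrow> k \<in> n" by (auto simp: cm_mem)
lemma cm_mem1: "1 \<in> cm m n \<longleftrightarrow> 0 \<notin> m" by (auto simp: cm_mem)
lemma bm_memm1: "-1 \<in> bm m n \<longleftrightarrow> 0 \<notin> n" by (auto simp: bm_mem)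

definition cl :: "int set \<Rightarrow> int \<Rightarrow> nat" where "cl S k = card {i\<in>S. i < k}"
definition pc :: "int set \<Rightarrow> nat" where "pc m = card {i\<in>m. 0 < i}"
definition nc :: "int set \<Rightarrow> nat" where "nc n = card {j\<in>n. j < 0}"
definition ee :: "int set \<Rightarrow> int set \<Rightarrow> nat" where
  "ee m n = (if 0 \<in> n then 0 else pc m + nc n) + (if 0 \<in> m then (if 0 \<in> n then 0 else 1) + pc m + nc n else 0)"

lemma cl_ins_self[simp]: "cl (insert k S) k = cl S k" unfolding cl_def by (rule arg_cong[where f=card]) auto
lemma cl_diff_self[simp]: "cl (S - {k}) k = cl S k" unfolding cl_def by (rule arg_cong[where f=card]) auto

lemma card_ins_filter: "finite m \<Longrightarrow> k \<notin> m \<Longrightarrow> card {i\<in>insert k m. P i} = card {i\<in>m. P i} + (if P k then 1 else 0)"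
proof -
  assume f: "finite m" and k: "k \<notin> m"
  show ?thesis
  proof (cases "P k")
    case True
    then have "{i\<in>insert k m. P i} = insert k {i\<in>m. P i}" by auto
    then show ?thesis using True f k by simp
  next
    case False
    then have "{i\<in>insert k m. P i} = {i\<in>m. P i}" by auto
    then show ?thesis using False by simp
  qed
qed

lemma card_split: "finite S \<Longrightarrow> card {i\<in>S. P i} = card {i\<in>S. P i \<and> Q i} + card {i\<in>S. P i \<and> \<not> Q i}"
proof -
  assume f: "finite S"
  have "{i\<in>S. P i} = {i\<in>S. P i \<and> Q i} \<union> {i\<in>S. P i \<and> \<not> Q i}" by auto
  moreover have "card ({i\<in>S. P i \<and> Q i} \<union> {i\<in>S. P i \<and> \<not> Q i}) = card {i\<in>S. P i \<and> Q i} + card {i\<in>S. P i \<and> \<not> Q i}"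
    by (rule card_Un_disjoint) (use f in auto)
  ultimately show ?thesis by simp
qed

lemma card_pt: "finite S \<Longrightarrow> card {i\<in>S. P i} = card {i\<in>S. i \<noteq> a \<and> P i} + (if a \<in> S \<and> P a then 1 else 0)"
proof -
  assume f: "finite S"
  have "card {i\<in>S. P i} = card {i\<in>S. P i \<and> i \<noteq> a} + card {i\<in>S. P i \<and> \<not> i \<noteq> a}"
    by (rule card_split[OF f])
  moreover have "{i\<in>S. P i \<and> \<not> i \<noteq> a} = (if a \<in> S \<and> P a then {a} else {})" by auto
  moreover have "{i\<in>S. P i \<and> i \<noteq> a} = {i\<in>S. i \<noteq> a \<and> P i}" by auto
  ultimately show ?thesis by simp
qed

lemma card_bm: "finite m \<Longrightarrow> card {i\<in>bm m n. P i} = card {i\<in>m. i \<noteq> 0 \<and> P (i - 1)} + (if 0 \<notin> n \<and> P (-1) then 1 else 0)"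
proof -
  assume f: "finite m"
  have inj: "inj_on (\<lambda>i::int. i - 1) X" for X by (auto simp: inj_on_def)
  have e: "{i\<in>(\<lambda>i::int. i - 1) ` (m - {0}). P i} = (\<lambda>i. i - 1) ` {i\<in>m. i \<noteq> 0 \<and> P (i - 1)}" by auto
  have c: "card {i\<in>(\<lambda>i::int. i - 1) ` (m - {0}). P i} = card {i\<in>m. i \<noteq> 0 \<and> P (i - 1)}"
    unfolding e by (rule card_image[OF inj])
  have nm: "-1 \<notin> (\<lambda>i::int. i - 1) ` (m - {0})" by simp
  have fi: "finite ((\<lambda>i::int. i - 1) ` (m - {0}))" using f by simp
  show ?thesis
  proof (cases "0 \<in> n")
    case True then show ?thesis using c by (simp add: bm_def)
  next
    case False then show ?thesis using c card_ins_filter[OF fi nm, of P] by (simp add: bm_def)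
  qed
qed

lemma card_cm: "finite n \<Longrightarrow> card {j\<in>cm m n. P j} = card {j\<in>n. j \<noteq> 0 \<and> P (j + 1)} + (if 0 \<notin> m \<and> P 1 then 1 else 0)"
proof -
  assume f: "finite n"
  have inj: "inj_on (\<lambda>i::int. i + 1) X" for X by (auto simp: inj_on_def)
  have e: "{i\<in>(\<lambda>i::int. i + 1) ` (n - {0}). P i} = (\<lambda>i. i + 1) ` {i\<in>n. i \<noteq> 0 \<and> P (i + 1)}" by auto
  have c: "card {i\<in>(\<lambda>i::int. i + 1) ` (n - {0}). P i} = card {i\<in>n. i \<noteq> 0 \<and> P (i + 1)}"
    unfolding e by (rule card_image[OF inj])
  have nm: "1 \<notin> (\<lambda>i::int. i + 1) ` (n - {0})" by simp
  have fi: "finite ((\<lambda>i::int. i + 1) ` (n - {0}))" using f by simp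
  show ?thesis
  proof (cases "0 \<in> m")
    case True then show ?thesis using c by (simp add: cm_def)
  next
    case False then show ?thesis using c card_ins_filter[OF fi nm, of P] by (simp add: cm_def)
  qed
qed

lemma card_sign: "finite m \<Longrightarrow> card m = pc m + card {i\<in>m. i < 0} + (if 0 \<in> m then 1 else 0)"
proof -
  assume f: "finite m"
  have "card {i\<in>m. True} = card {i\<in>m. True \<and> 0 < i} + card {i\<in>m. True \<and> \<not> 0 < i}"
    by (rule card_split[OF f])
  moreover have "card {i\<in>m. \<not> 0 < i} = card {i\<in>m. i \<noteq> 0 \<and> \<not> 0 < i} + (if 0 \<in> m \<and> \<not> 0 < (0::int) then 1 else 0)"
    by (rule card_pt[OF f])
  moreover have "{i\<in>m. i \<noteq> 0 \<and> \<not> 0 < i} = {i\<in>m. i < 0}" by auto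
  ultimately show ?thesis by (simp add: pc_def)
qed

lemma even_cases: "(\<not> P \<Longrightarrow> even (a::nat)) \<Longrightarrow> (P \<Longrightarrow> even a) \<Longrightarrow> even a" by blast

lemma P1: assumes f: "finite m" "finite n" and k: "k \<noteq> 0" "k \<notin> m"
  shows "even (ee (insert k m) n + cl m k + cl (bm m n) (k - 1) + ee m n)"
proof -
  have a: "pc (insert k m) = pc m + (if 0 < k then 1 else 0)"
    unfolding pc_def by (rule card_ins_filter[OF f(1) k(2)])
  have b: "cl (bm m n) (k - 1) = card {i\<in>m. i \<noteq> 0 \<and> i < k} + (if 0 \<notin> n \<and> 0 < k then 1 else 0)"
    unfolding cl_def by (subst card_bm[OF f(1)]) auto
  have c: "cl m k = card {i\<in>m. i \<noteq> 0 \<and> i < k} + (if 0 \<in> m \<and> 0 < k then 1 else 0)"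
    unfolding cl_def by (rule card_pt[OF f(1)])
  have d: "0 \<in> insert k m \<longleftrightarrow> 0 \<in> m" using k by auto
  show ?thesis unfolding ee_def d a b c
    by (cases "0 \<in> m"; cases "0 \<in> n"; cases "0 < k"; simp; presburger)
qed

lemma P2: assumes f: "finite m" "finite n" and k: "k \<noteq> 0" "k \<notin> n"
  shows "even (ee m (insert k n) + card m + cl n k + card (bm m n) + cl (cm m n) (k + 1) + ee m n)"
proof -
  have a: "nc (insert k n) = nc n + (if k < 0 then 1 else 0)"
    unfolding nc_def by (rule card_ins_filter[OF f(2) k(2)])
  have b: "cl (cm m n) (k + 1) = card {i\<in>n. i \<noteq> 0 \<and> i < k} + (if 0 \<notin> m \<and> 0 < k then 1 else 0)"
    unfolding cl_def by (subst card_cm[OF f(2)]) (auto intro!: arg_cong[where f=card])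
  have c: "cl n k = card {i\<in>n. i \<noteq> 0 \<and> i < k} + (if 0 \<in> n \<and> 0 < k then 1 else 0)"
    unfolding cl_def by (rule card_pt[OF f(2)])
  have e: "card (bm m n) = card {i\<in>m. i \<noteq> 0} + (if 0 \<notin> n then 1 else 0)"
    using card_bm[OF f(1), of n "\<lambda>_. True"] by simp
  have g: "card m = card {i\<in>m. i \<noteq> 0} + (if 0 \<in> m then 1 else 0)"
    using card_pt[OF f(1), of "\<lambda>_. True" 0] by simp
  have d: "0 \<in> insert k n \<longleftrightarrow> 0 \<in> n" using k by auto
  show ?thesis using g k unfolding ee_def d a b c e
    by (cases "0 \<in> m"; cases "0 \<in> n"; cases "0 < k"; simp; presburger)
qed

lemma P3: assumes f: "finite m" "finite n" and k: "0 \<notin> m"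
  shows "even (ee (insert 0 m) n + cl m 0 + card (bm m n) + cl (cm m n) 1 + ee m n)"
proof -
  have b: "cl (cm m n) 1 = nc n"
    unfolding cl_def nc_def by (subst card_cm[OF f(2)]) (auto intro!: arg_cong[where f=card])
  have e: "card (bm m n) = card {i\<in>m. i \<noteq> 0} + (if 0 \<notin> n then 1 else 0)"
    using card_bm[OF f(1), of n "\<lambda>_. True"] by simp
  have g: "card m = card {i\<in>m. i \<noteq> 0} + (if 0 \<in> m then 1 else 0)"
    using card_pt[OF f(1), of "\<lambda>_. True" 0] by simp
  have s: "card m = pc m + cl m 0 + (if 0 \<in> m then 1 else 0)" using card_sign[OF f(1)] by (simp add: cl_def)
  have p: "pc (insert 0 m) = pc m" unfolding pc_def by (rule arg_cong[where f=card]) auto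
  show ?thesis using g s k unfolding ee_def b e p
    by (cases "0 \<in> n"; simp; presburger)
qed

lemma P4: assumes f: "finite m" "finite n" and k: "0 \<notin> n"
  shows "even (ee m (insert 0 n) + card m + cl n 0 + cl (bm m n) (-1) + ee m n)"
proof -
  have b: "cl (bm m n) (-1) = card {i\<in>m. i < 0}"
    unfolding cl_def by (subst card_bm[OF f(1)]) (auto intro!: arg_cong[where f=card])
  have s: "card m = pc m + card {i\<in>m. i < 0} + (if 0 \<in> m then 1 else 0)" using card_sign[OF f(1)] by simp
  have p: "nc (insert 0 n) = nc n" unfolding nc_def by (rule arg_cong[where f=card]) auto
  have q: "cl n 0 = nc n" by (simp add: cl_def nc_def)
  show ?thesis using s k unfolding ee_def b p q
    by (cases "0 \<in> m"; simp; presburger)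
qed

definition eps :: "int set \<times> int set \<Rightarrow> complex" where "eps p = (-1) ^ ee (fst p) (snd p)"
definition Gam :: "fvec \<Rightarrow> fvec" where "Gam f = (\<lambda>q. eps (tau q) * f (tau q))"
definition Hinv :: "fvec \<Rightarrow> fvec" where "Hinv g = (\<lambda>p. eps p * g (sig p))"

lemma sig_pair: "sig (m, n) = (bm m n, cm m n)" by (simp add: sig_def)
lemma Gam_sig: "Gam f (sig p) = eps p * f p" by (simp add: Gam_def)
lemma eps_sq: "eps p * eps p = 1" by (simp add: eps_def power_add[symmetric])

lemma bdag_at: "bdag k f (m, n) = (if k \<in> m then (-1) ^ cl m k * f (m - {k}, n) else 0)"
  by (simp add: bdag_def cl_def)
lemma bann_at: "bann k f (m, n) = (if k \<notin> m then (-1) ^ cl m k * f (insert k m, n) else 0)"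
  by (simp add: bann_def cl_def)
lemma cdag_at: "cdag k f (m, n) = (if k \<in> n then (-1) ^ (card m + cl n k) * f (m, n - {k}) else 0)"
  by (simp add: cdag_def cl_def)
lemma cann_at: "cann k f (m, n) = (if k \<notin> n then (-1) ^ (card m + cl n k) * f (m, insert k n) else 0)"
  by (simp add: cann_def cl_def)

lemma fock_fin: "f \<in> fock_space \<Longrightarrow> f (m, n) \<noteq> 0 \<Longrightarrow> finite m \<and> finite n"
  by (simp add: fock_space_def)

lemma sgn4: "even (a + b + c + d) \<Longrightarrow> (-1::complex) ^ a * ((-1) ^ b * x) = (-1) ^ c * ((-1) ^ d * x)"
proof -
  assume e: "even (a + b + c + d)"
  have "(-1::complex) ^ (a + b) = (-1) ^ (c + d)"
  proof (cases "even (a + b)")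
    case True
    then have "even (c + d)" using e by presburger
    then show ?thesis using True by simp
  next
    case False
    then have "odd (c + d)" using e by presburger
    then show ?thesis using False by simp
  qed
  then show ?thesis by (simp add: power_add mult.assoc)
qed

lemma all_sig: "(\<And>m n. F (sig (m, n)) = H (sig (m, n))) \<Longrightarrow> F = H"
proof
  fix q assume h: "\<And>m n. F (sig (m, n)) = H (sig (m, n))"
  have "q = sig (tau q)" by simp
  then show "F q = H q" by (metis h prod.collapse)
qed

lemma Rbdag: assumes f: "f \<in> fock_space" and k: "k \<noteq> 0"
  shows "Gam (bdag k f) = bdag (k - 1) (Gam f)"
proof (rule all_sig)
  fix m n
  have L: "Gam (bdag k f) (sig (m, n)) = eps (m, n) * bdag k f (m, n)" by (rule Gam_sig)
  have R: "bdag (k - 1) (Gam f) (sig (m, n)) = (if k - 1 \<in> bm m n then (-1) ^ cl (bm m n) (k - 1) * Gam f (bm m n - {k - 1}, cm m n) else 0)"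
    by (simp add: sig_pair bdag_at)
  show "Gam (bdag k f) (sig (m, n)) = bdag (k - 1) (Gam f) (sig (m, n))"
  proof (cases "k \<in> m")
    case True
    have s: "(bm m n - {k - 1}, cm m n) = sig (m - {k}, n)"
      by (simp add: sig_pair bm_diff[OF k] cm_diffm[OF k])
    have G: "Gam f (bm m n - {k - 1}, cm m n) = eps (m - {k}, n) * f (m - {k}, n)"
      by (simp only: s Gam_sig)
    show ?thesis
    proof (cases "f (m - {k}, n) = 0")
      case True
      then show ?thesis unfolding L R G by (simp add: bdag_at)
    next
      case False
      then have "finite (m - {k}) \<and> finite n" using fock_fin[OF f] by blast
      then have fin: "finite m" "finite n" by auto
      have mi: "insert k (m - {k}) = m" using \<open>k \<in> m\<close> by auto
      have "even (ee m n + cl (m - {k}) k + cl (bm (m - {k}) n) (k - 1) + ee (m - {k}) n)"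
        using P1[of "m - {k}" n k] fin k mi by auto
      then have e: "even (ee m n + cl m k + cl (bm m n) (k - 1) + ee (m - {k}) n)"
        by (simp add: bm_diff[OF k])
      show ?thesis unfolding L R G
        using \<open>k \<in> m\<close> bm_memk[OF k, of m n]
        by (simp add: bdag_at eps_def sgn4[OF e])
    qed
  next
    case False
    then show ?thesis unfolding L R using bm_memk[OF k, of m n] by (simp add: bdag_at)
  qed
qed

lemma Rbann: assumes f: "f \<in> fock_space" and k: "k \<noteq> 0"
  shows "Gam (bann k f) = bann (k - 1) (Gam f)"
proof (rule all_sig)
  fix m n
  have L: "Gam (bann k f) (sig (m, n)) = eps (m, n) * bann k f (m, n)" by (rule Gam_sig)
  have R: "bann (k - 1) (Gam f) (sig (m, n)) = (if k - 1 \<notin> bm m n then (-1) ^ cl (bm m n) (k - 1) * Gam f (insert (k - 1) (bm m n), cm m n) else 0)"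
    by (simp add: sig_pair bann_at)
  show "Gam (bann k f) (sig (m, n)) = bann (k - 1) (Gam f) (sig (m, n))"
  proof (cases "k \<notin> m")
    case True
    have s: "(insert (k - 1) (bm m n), cm m n) = sig (insert k m, n)"
      by (simp add: sig_pair bm_ins[OF k] cm_insm[OF k])
    have G: "Gam f (insert (k - 1) (bm m n), cm m n) = eps (insert k m, n) * f (insert k m, n)"
      by (simp only: s Gam_sig)
    show ?thesis
    proof (cases "f (insert k m, n) = 0")
      case True
      then show ?thesis unfolding L R G by (simp add: bann_at)
    next
      case False
      then have "finite (fst (insert k m, n)) \<and> finite (snd (insert k m, n))" using fock_fin[OF f] by (metis prod.collapse)
      then have fin: "finite m" "finite n" by auto
      have e0: "even (ee (insert k m) n + cl m k + cl (bm m n) (k - 1) + ee m n)"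
        using P1[of m n k] fin \<open>k \<notin> m\<close> k by (simp add: insert_absorb)
      have e: "even (ee m n + cl m k + cl (bm m n) (k - 1) + ee (insert k m) n)"
        using e0 by (simp add: ; presburger)
      show ?thesis unfolding L R G
        using \<open>k \<notin> m\<close> bm_memk[OF k, of m n]
        by (simp add: bann_at eps_def sgn4[OF e])
    qed
  next
    case False
    then show ?thesis unfolding L R using bm_memk[OF k, of m n] by (simp add: bann_at)
  qed
qed

lemma Rcdag: assumes f: "f \<in> fock_space" and k: "k \<noteq> 0"
  shows "Gam (cdag k f) = cdag (k + 1) (Gam f)"
proof (rule all_sig)
  fix m n
  have L: "Gam (cdag k f) (sig (m, n)) = eps (m, n) * cdag k f (m, n)" by (rule Gam_sig)
  have R: "cdag (k + 1) (Gam f) (sig (m, n)) = (if k + 1 \<in> cm m n then (-1) ^ (card (bm m n) + cl (cm m n) (k + 1)) * Gam f (bm m n, cm m n - {k + 1}) else 0)"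
    by (simp add: sig_pair cdag_at)
  show "Gam (cdag k f) (sig (m, n)) = cdag (k + 1) (Gam f) (sig (m, n))"
  proof (cases "k \<in> n")
    case True
    have s: "(bm m n, cm m n - {k + 1}) = sig (m, n - {k})"
      by (simp add: sig_pair bm_diffn[OF k] cm_diff[OF k])
    have G: "Gam f (bm m n, cm m n - {k + 1}) = eps (m, n - {k}) * f (m, n - {k})"
      by (simp only: s Gam_sig)
    show ?thesis
    proof (cases "f (m, n - {k}) = 0")
      case True
      then show ?thesis unfolding L R G by (simp add: cdag_at)
    next
      case False
      then have "finite (fst (m, n - {k})) \<and> finite (snd (m, n - {k}))" using fock_fin[OF f] by (metis prod.collapse)
      then have fin: "finite m" "finite n" by auto
      have e0: "even (ee m (insert k (n - {k})) + card m + cl (n - {k}) k + card (bm m (n - {k})) + cl (cm m (n - {k})) (k + 1) + ee m (n - {k}))"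
        using P2[of m "n - {k}" k] fin \<open>k \<in> n\<close> k by (simp add: insert_absorb)
      have e: "even (ee m n + (card m + cl n k) + (card (bm m n) + cl (cm m n) (k + 1)) + ee m (n - {k}))"
        using e0 by (simp add: bm_diffn[OF k] cm_diff[OF k] insert_absorb \<open>k \<in> n\<close>; presburger)
      show ?thesis unfolding L R G
        using \<open>k \<in> n\<close> cm_memk[OF k, of m n]
        by (simp add: cdag_at eps_def sgn4[OF e])
    qed
  next
    case False
    then show ?thesis unfolding L R using cm_memk[OF k, of m n] by (simp add: cdag_at)
  qed
qed

lemma Rcann: assumes f: "f \<in> fock_space" and k: "k \<noteq> 0"
  shows "Gam (cann k f) = cann (k + 1) (Gam f)"
proof (rule all_sig)
  fix m n
  have L: "Gam (cann k f) (sig (m, n)) = eps (m, n) * cann k f (m, n)" by (rule Gam_sig)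
  have R: "cann (k + 1) (Gam f) (sig (m, n)) = (if k + 1 \<notin> cm m n then (-1) ^ (card (bm m n) + cl (cm m n) (k + 1)) * Gam f (bm m n, insert (k + 1) (cm m n)) else 0)"
    by (simp add: sig_pair cann_at)
  show "Gam (cann k f) (sig (m, n)) = cann (k + 1) (Gam f) (sig (m, n))"
  proof (cases "k \<notin> n")
    case True
    have s: "(bm m n, insert (k + 1) (cm m n)) = sig (m, insert k n)"
      by (simp add: sig_pair bm_insn[OF k] cm_ins[OF k])
    have G: "Gam f (bm m n, insert (k + 1) (cm m n)) = eps (m, insert k n) * f (m, insert k n)"
      by (simp only: s Gam_sig)
    show ?thesis
    proof (cases "f (m, insert k n) = 0")
      case True
      then show ?thesis unfolding L R G by (simp add: cann_at)
    next
      case False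
      then have "finite (fst (m, insert k n)) \<and> finite (snd (m, insert k n))" using fock_fin[OF f] by (metis prod.collapse)
      then have fin: "finite m" "finite n" by auto
      have e0: "even (ee m (insert k n) + card m + cl n k + card (bm m n) + cl (cm m n) (k + 1) + ee m n)"
        using P2[of m n k] fin \<open>k \<notin> n\<close> k by (simp add: insert_absorb)
      have e: "even (ee m n + (card m + cl n k) + (card (bm m n) + cl (cm m n) (k + 1)) + ee m (insert k n))"
        using e0 by (simp add: ; presburger)
      show ?thesis unfolding L R G
        using \<open>k \<notin> n\<close> cm_memk[OF k, of m n]
        by (simp add: cann_at eps_def sgn4[OF e])
    qed
  next
    case False
    then show ?thesis unfolding L R using cm_memk[OF k, of m n] by (simp add: cann_at)
  qed
qed

lemma Rbdag0: assumes f: "f \<in> fock_space"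
  shows "Gam (bdag 0 f) = cann 1 (Gam f)"
proof (rule all_sig)
  fix m n
  have L: "Gam (bdag 0 f) (sig (m, n)) = eps (m, n) * bdag 0 f (m, n)" by (rule Gam_sig)
  have R: "cann 1 (Gam f) (sig (m, n)) = (if 1 \<notin> cm m n then (-1) ^ (card (bm m n) + cl (cm m n) 1) * Gam f (bm m n, insert 1 (cm m n)) else 0)"
    by (simp add: sig_pair cann_at)
  show "Gam (bdag 0 f) (sig (m, n)) = cann 1 (Gam f) (sig (m, n))"
  proof (cases "0 \<in> m")
    case True
    have s: "(bm m n, insert 1 (cm m n)) = sig (m - {0}, n)"
      by (simp add: sig_pair bm_diff0 cm_diff0)
    have G: "Gam f (bm m n, insert 1 (cm m n)) = eps (m - {0}, n) * f (m - {0}, n)"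
      by (simp only: s Gam_sig)
    show ?thesis
    proof (cases "f (m - {0}, n) = 0")
      case True
      then show ?thesis unfolding L R G by (simp add: bdag_at)
    next
      case False
      then have "finite (fst (m - {0}, n)) \<and> finite (snd (m - {0}, n))" using fock_fin[OF f] by (metis prod.collapse)
      then have fin: "finite m" "finite n" by auto
      have e0: "even (ee (insert 0 (m - {0})) n + cl (m - {0}) 0 + card (bm (m - {0}) n) + cl (cm (m - {0}) n) 1 + ee (m - {0}) n)"
        using P3[of "m - {0}" n] fin \<open>0 \<in> m\<close>  by (simp add: insert_absorb)
      have e: "even (ee m n + cl m 0 + (card (bm m n) + cl (cm m n) 1) + ee (m - {0}) n)"
        using e0 by (simp add: bm_diff0 cm_diff0 insert_absorb \<open>0 \<in> m\<close>; presburger)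
      show ?thesis unfolding L R G
        using \<open>0 \<in> m\<close> cm_mem1[of m n]
        by (simp add: bdag_at eps_def sgn4[OF e])
    qed
  next
    case False
    then show ?thesis unfolding L R using cm_mem1[of m n] by (simp add: bdag_at)
  qed
qed

lemma Rbann0: assumes f: "f \<in> fock_space"
  shows "Gam (bann 0 f) = cdag 1 (Gam f)"
proof (rule all_sig)
  fix m n
  have L: "Gam (bann 0 f) (sig (m, n)) = eps (m, n) * bann 0 f (m, n)" by (rule Gam_sig)
  have R: "cdag 1 (Gam f) (sig (m, n)) = (if 1 \<in> cm m n then (-1) ^ (card (bm m n) + cl (cm m n) 1) * Gam f (bm m n, cm m n - {1}) else 0)"
    by (simp add: sig_pair cdag_at)
  show "Gam (bann 0 f) (sig (m, n)) = cdag 1 (Gam f) (sig (m, n))"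
  proof (cases "0 \<notin> m")
    case True
    have s: "(bm m n, cm m n - {1}) = sig (insert 0 m, n)"
      by (simp add: sig_pair bm_ins0 cm_ins0)
    have G: "Gam f (bm m n, cm m n - {1}) = eps (insert 0 m, n) * f (insert 0 m, n)"
      by (simp only: s Gam_sig)
    show ?thesis
    proof (cases "f (insert 0 m, n) = 0")
      case True
      then show ?thesis unfolding L R G by (simp add: bann_at)
    next
      case False
      then have "finite (fst (insert 0 m, n)) \<and> finite (snd (insert 0 m, n))" using fock_fin[OF f] by (metis prod.collapse)
      then have fin: "finite m" "finite n" by auto
      have e0: "even (ee (insert 0 m) n + cl m 0 + card (bm m n) + cl (cm m n) 1 + ee m n)"
        using P3[of m n] fin \<open>0 \<notin> m\<close>  by (simp add: insert_absorb)
      have e: "even (ee m n + cl m 0 + (card (bm m n) + cl (cm m n) 1) + ee (insert 0 m) n)"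
        using e0 by (simp add: ; presburger)
      show ?thesis unfolding L R G
        using \<open>0 \<notin> m\<close> cm_mem1[of m n]
        by (simp add: bann_at eps_def sgn4[OF e])
    qed
  next
    case False
    then show ?thesis unfolding L R using cm_mem1[of m n] by (simp add: bann_at)
  qed
qed

lemma Rcdag0: assumes f: "f \<in> fock_space"
  shows "Gam (cdag 0 f) = bann (-1) (Gam f)"
proof (rule all_sig)
  fix m n
  have L: "Gam (cdag 0 f) (sig (m, n)) = eps (m, n) * cdag 0 f (m, n)" by (rule Gam_sig)
  have R: "bann (-1) (Gam f) (sig (m, n)) = (if -1 \<notin> bm m n then (-1) ^ cl (bm m n) (-1) * Gam f (insert (-1) (bm m n), cm m n) else 0)"
    by (simp add: sig_pair bann_at)
  show "Gam (cdag 0 f) (sig (m, n)) = bann (-1) (Gam f) (sig (m, n))"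
  proof (cases "0 \<in> n")
    case True
    have s: "(insert (-1) (bm m n), cm m n) = sig (m, n - {0})"
      by (simp add: sig_pair bm_diffn0 cm_diffn0)
    have G: "Gam f (insert (-1) (bm m n), cm m n) = eps (m, n - {0}) * f (m, n - {0})"
      by (simp only: s Gam_sig)
    show ?thesis
    proof (cases "f (m, n - {0}) = 0")
      case True
      then show ?thesis unfolding L R G by (simp add: cdag_at)
    next
      case False
      then have "finite (fst (m, n - {0})) \<and> finite (snd (m, n - {0}))" using fock_fin[OF f] by (metis prod.collapse)
      then have fin: "finite m" "finite n" by auto
      have e0: "even (ee m (insert 0 (n - {0})) + card m + cl (n - {0}) 0 + cl (bm m (n - {0})) (-1) + ee m (n - {0}))"
        using P4[of m "n - {0}"] fin \<open>0 \<in> n\<close>  by (simp add: insert_absorb)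
      have e: "even (ee m n + (card m + cl n 0) + cl (bm m n) (-1) + ee m (n - {0}))"
        using e0 by (simp add: bm_diffn0 cm_diffn0 insert_absorb \<open>0 \<in> n\<close>; presburger)
      show ?thesis unfolding L R G
        using \<open>0 \<in> n\<close> bm_memm1[of m n]
        by (simp add: cdag_at eps_def sgn4[OF e])
    qed
  next
    case False
    then show ?thesis unfolding L R using bm_memm1[of m n] by (simp add: cdag_at)
  qed
qed

lemma Rcann0: assumes f: "f \<in> fock_space"
  shows "Gam (cann 0 f) = bdag (-1) (Gam f)"
proof (rule all_sig)
  fix m n
  have L: "Gam (cann 0 f) (sig (m, n)) = eps (m, n) * cann 0 f (m, n)" by (rule Gam_sig)
  have R: "bdag (-1) (Gam f) (sig (m, n)) = (if -1 \<in> bm m n then (-1) ^ cl (bm m n) (-1) * Gam f (bm m n - {-1}, cm m n) else 0)"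
    by (simp add: sig_pair bdag_at)
  show "Gam (cann 0 f) (sig (m, n)) = bdag (-1) (Gam f) (sig (m, n))"
  proof (cases "0 \<notin> n")
    case True
    have s: "(bm m n - {-1}, cm m n) = sig (m, insert 0 n)"
      by (simp add: sig_pair bm_insn0 cm_insn0)
    have G: "Gam f (bm m n - {-1}, cm m n) = eps (m, insert 0 n) * f (m, insert 0 n)"
      by (simp only: s Gam_sig)
    show ?thesis
    proof (cases "f (m, insert 0 n) = 0")
      case True
      then show ?thesis unfolding L R G by (simp add: cann_at)
    next
      case False
      then have "finite (fst (m, insert 0 n)) \<and> finite (snd (m, insert 0 n))" using fock_fin[OF f] by (metis prod.collapse)
      then have fin: "finite m" "finite n" by auto
      have e0: "even (ee m (insert 0 n) + card m + cl n 0 + cl (bm m n) (-1) + ee m n)"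
        using P4[of m n] fin \<open>0 \<notin> n\<close>  by (simp add: insert_absorb)
      have e: "even (ee m n + (card m + cl n 0) + cl (bm m n) (-1) + ee m (insert 0 n))"
        using e0 by (simp add: ; presburger)
      show ?thesis unfolding L R G
        using \<open>0 \<notin> n\<close> bm_memm1[of m n]
        by (simp add: cann_at eps_def sgn4[OF e])
    qed
  next
    case False
    then show ?thesis unfolding L R using bm_memm1[of m n] by (simp add: cann_at)
  qed
qed





lemma summ_op:
  assumes s: "(\<lambda>p. (cmod (f p))^2) summable_on UNIV" and i: "inj_on \<phi> C"
    and z: "\<And>p. p \<notin> C \<Longrightarrow> g p = 0" and e: "\<And>p. p \<in> C \<Longrightarrow> cmod (g p) = cmod (f (\<phi> p))"
  shows "(\<lambda>p. (cmod (g p))^2) summable_on UNIV"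
proof -
  have "(\<lambda>x. (cmod (f x))^2) summable_on (\<phi> ` C)" by (rule summable_on_subset[OF s]) auto
  then have "((\<lambda>x. (cmod (f x))^2) \<circ> \<phi>) summable_on C" by (simp add: summable_on_reindex[OF i])
  then have "(\<lambda>p. (cmod (g p))^2) summable_on C" by (rule summable_on_cong[THEN iffD1, rotated]) (simp add: e)
  then show ?thesis by (rule summable_on_cong_neutral[THEN iffD1, rotated -1]) (auto simp: z)
qed

lemma fock_iff: "f \<in> fock_space \<longleftrightarrow> (\<forall>m n. f (m, n) \<noteq> 0 \<longrightarrow> finite m \<and> finite n) \<and> (\<lambda>p. (cmod (f p))^2) summable_on UNIV"
  by (simp add: fock_space_def)

lemma bdag_fock: assumes f: "f \<in> fock_space" shows "bdag k f \<in> fock_space"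
proof -
  have s: "(\<lambda>p. (cmod (f p))^2) summable_on UNIV" using f by (simp add: fock_iff)
  have "(\<lambda>p. (cmod (bdag k f p))^2) summable_on UNIV"
  proof (rule summ_op[OF s, of "\<lambda>p. (fst p - {k}, snd p)" "{p. k \<in> fst p}"])
    show "inj_on (\<lambda>p. (fst p - {k}, snd p)) {p. k \<in> fst p}"
      by (auto simp: inj_on_def)
  qed (auto simp: bdag_def norm_mult norm_power)
  moreover have "\<forall>m n. bdag k f (m, n) \<noteq> 0 \<longrightarrow> finite m \<and> finite n"
    using f by (auto simp: bdag_at fock_iff split: if_splits) (metis Diff_empty finite_Diff_insert)+
  ultimately show ?thesis by (simp add: fock_iff)
qed

lemma bann_fock: assumes f: "f \<in> fock_space" shows "bann k f \<in> fock_space"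
proof -
  have s: "(\<lambda>p. (cmod (f p))^2) summable_on UNIV" using f by (simp add: fock_iff)
  have "(\<lambda>p. (cmod (bann k f p))^2) summable_on UNIV"
  proof (rule summ_op[OF s, of "\<lambda>p. (insert k (fst p), snd p)" "{p. k \<notin> fst p}"])
    show "inj_on (\<lambda>p. (insert k (fst p), snd p)) {p. k \<notin> fst p}"
      by (auto simp: inj_on_def)
  qed (auto simp: bann_def norm_mult norm_power)
  moreover have "\<forall>m n. bann k f (m, n) \<noteq> 0 \<longrightarrow> finite m \<and> finite n"
    using f by (auto simp: bann_at fock_iff split: if_splits) (metis finite_insert)+
  ultimately show ?thesis by (simp add: fock_iff)
qed

lemma cdag_fock: assumes f: "f \<in> fock_space" shows "cdag k f \<in> fock_space"
proof -
  have s: "(\<lambda>p. (cmod (f p))^2) summable_on UNIV" using f by (simp add: fock_iff)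
  have "(\<lambda>p. (cmod (cdag k f p))^2) summable_on UNIV"
  proof (rule summ_op[OF s, of "\<lambda>p. (fst p, snd p - {k})" "{p. k \<in> snd p}"])
    show "inj_on (\<lambda>p. (fst p, snd p - {k})) {p. k \<in> snd p}"
      by (auto simp: inj_on_def)
  qed (auto simp: cdag_def norm_mult norm_power)
  moreover have "\<forall>m n. cdag k f (m, n) \<noteq> 0 \<longrightarrow> finite m \<and> finite n"
    using f by (auto simp: cdag_at fock_iff split: if_splits) (metis Diff_empty finite_Diff_insert)+
  ultimately show ?thesis by (simp add: fock_iff)
qed

lemma cann_fock: assumes f: "f \<in> fock_space" shows "cann k f \<in> fock_space"
proof -
  have s: "(\<lambda>p. (cmod (f p))^2) summable_on UNIV" using f by (simp add: fock_iff)
  have "(\<lambda>p. (cmod (cann k f p))^2) summable_on UNIV"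
  proof (rule summ_op[OF s, of "\<lambda>p. (fst p, insert k (snd p))" "{p. k \<notin> snd p}"])
    show "inj_on (\<lambda>p. (fst p, insert k (snd p))) {p. k \<notin> snd p}"
      by (auto simp: inj_on_def)
  qed (auto simp: cann_def norm_mult norm_power)
  moreover have "\<forall>m n. cann k f (m, n) \<noteq> 0 \<longrightarrow> finite m \<and> finite n"
    using f by (auto simp: cann_at fock_iff split: if_splits) (metis finite_insert)+
  ultimately show ?thesis by (simp add: fock_iff)
qed

lemma cmod_eps[simp]: "cmod (eps p) = 1" by (simp add: eps_def norm_power)

lemma bij_tau: "bij tau"
  by (metis bij_betw_byWitness subset_UNIV tau_sig sig_tau image_subset_iff UNIV_I)

lemma fin_sig: "finite (fst (sig p)) \<and> finite (snd (sig p)) \<longleftrightarrow> finite (fst p) \<and> finite (snd p)"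
  by (simp add: sig_def)

lemma Gam_fock: assumes f: "f \<in> fock_space" shows "Gam f \<in> fock_space"
proof -
  have s: "(\<lambda>p. (cmod (f p))^2) summable_on UNIV" using f by (simp add: fock_iff)
  have "(\<lambda>q. (cmod (f (tau q)))^2) summable_on UNIV"
    using summable_on_reindex_bij_betw[OF bij_tau, of "\<lambda>p. (cmod (f p))^2"] s by simp
  then have "(\<lambda>q. (cmod (Gam f q))^2) summable_on UNIV" by (simp add: Gam_def norm_mult)
  moreover have "\<forall>m n. Gam f (m, n) \<noteq> 0 \<longrightarrow> finite m \<and> finite n"
  proof (intro allI impI)
    fix m n assume "Gam f (m, n) \<noteq> 0"
    then have "f (tau (m, n)) \<noteq> 0" by (simp add: Gam_def)
    then have "finite (fst (tau (m, n))) \<and> finite (snd (tau (m, n)))" using f fock_fin by (metis prod.collapse)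
    then have "finite (fst (sig (tau (m, n)))) \<and> finite (snd (sig (tau (m, n))))" using fin_sig by blast
    then show "finite m \<and> finite n" by simp
  qed
  ultimately show ?thesis by (simp add: fock_iff)
qed

lemma Hinv_fock: assumes f: "f \<in> fock_space" shows "Hinv f \<in> fock_space"
proof -
  have s: "(\<lambda>p. (cmod (f p))^2) summable_on UNIV" using f by (simp add: fock_iff)
  have "(\<lambda>q. (cmod (f (sig q)))^2) summable_on UNIV"
    using summable_on_reindex_bij_betw[OF bij_sig, of "\<lambda>p. (cmod (f p))^2"] s by simp
  then have "(\<lambda>q. (cmod (Hinv f q))^2) summable_on UNIV" by (simp add: Hinv_def norm_mult)
  moreover have "\<forall>m n. Hinv f (m, n) \<noteq> 0 \<longrightarrow> finite m \<and> finite n"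
  proof (intro allI impI)
    fix m n assume "Hinv f (m, n) \<noteq> 0"
    then have "f (sig (m, n)) \<noteq> 0" by (simp add: Hinv_def)
    then have "finite (fst (sig (m, n))) \<and> finite (snd (sig (m, n)))" using f fock_fin by (metis prod.collapse)
    then show "finite m \<and> finite n" using fin_sig by (metis fst_conv snd_conv)
  qed
  ultimately show ?thesis by (simp add: fock_iff)
qed

lemma Gam_Hinv[simp]: "Gam (Hinv g) = g"
  by (rule ext) (simp add: Gam_def Hinv_def mult.assoc[symmetric] eps_sq)
lemma Hinv_Gam[simp]: "Hinv (Gam f) = f"
  by (rule ext) (simp add: Gam_def Hinv_def mult.assoc[symmetric] eps_sq)

lemma Gam_norm: "fock_norm (Gam f) = fock_norm f"
proof -
  have "infsum (\<lambda>q. (cmod (f (tau q)))^2) UNIV = infsum (\<lambda>p. (cmod (f p))^2) UNIV"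
    by (rule infsum_reindex_bij_betw[OF bij_tau])
  then show ?thesis by (simp add: fock_norm_def Gam_def norm_mult)
qed

lemma Hinv_norm: "fock_norm (Hinv f) = fock_norm f"
proof -
  have "infsum (\<lambda>q. (cmod (f (sig q)))^2) UNIV = infsum (\<lambda>p. (cmod (f p))^2) UNIV"
    by (rule infsum_reindex_bij_betw[OF bij_sig])
  then show ?thesis by (simp add: fock_norm_def Hinv_def norm_mult)
qed

lemma fock_lin: assumes f: "f \<in> fock_space" and g: "g \<in> fock_space"
  shows "(\<lambda>p. a * f p + g p) \<in> fock_space"
proof -
  have sf: "(\<lambda>p. (cmod (f p))^2) summable_on UNIV" using f by (simp add: fock_iff)
  have sg: "(\<lambda>p. (cmod (g p))^2) summable_on UNIV" using g by (simp add: fock_iff)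
  have "(\<lambda>p. 2 * (cmod a)^2 * (cmod (f p))^2 + 2 * (cmod (g p))^2) summable_on UNIV"
    by (intro summable_on_add summable_on_cmult_right sf sg)
  then have "(\<lambda>p. (cmod (a * f p + g p))^2) summable_on UNIV"
  proof (rule summable_on_comparison_test)
    fix p :: "int set \<times> int set"
    have "cmod (a * f p + g p) \<le> cmod a * cmod (f p) + cmod (g p)"
      by (metis norm_mult norm_triangle_ineq)
    then have "(cmod (a * f p + g p))^2 \<le> (cmod a * cmod (f p) + cmod (g p))^2"
      by (simp add: power_mono)
    also have "\<dots> \<le> 2 * (cmod a * cmod (f p))^2 + 2 * (cmod (g p))^2"
    proof -
      have "0 \<le> (cmod a * cmod (f p) - cmod (g p))^2" by simp
      then show ?thesis by (simp add: power2_eq_square algebra_simps)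
    qed
    also have "\<dots> = 2 * (cmod a)^2 * (cmod (f p))^2 + 2 * (cmod (g p))^2"
      by (simp add: power_mult_distrib)
    finally show "(cmod (a * f p + g p))^2 \<le> 2 * (cmod a)^2 * (cmod (f p))^2 + 2 * (cmod (g p))^2" .
  qed simp
  moreover have "\<forall>m n. a * f (m, n) + g (m, n) \<noteq> 0 \<longrightarrow> finite m \<and> finite n"
    using f g unfolding fock_iff by (metis add_0 mult_zero_right)
  ultimately show ?thesis by (simp add: fock_iff)
qed




lemma Gam_lin: "Gam (\<lambda>p. a * f p + g p) = (\<lambda>p. a * Gam f p + Gam g p)"
  by (simp add: Gam_def algebra_simps)
lemma Hinv_lin: "Hinv (\<lambda>p. a * f p + g p) = (\<lambda>p. a * Hinv f p + Hinv g p)"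
  by (simp add: Hinv_def algebra_simps)

lemma Gam_image: "Gam ` fock_space = fock_space"
proof
  show "Gam ` fock_space \<subseteq> fock_space" using Gam_fock by blast
  show "fock_space \<subseteq> Gam ` fock_space"
  proof
    fix g assume "g \<in> fock_space"
    then show "g \<in> Gam ` fock_space" using Hinv_fock Gam_Hinv by (metis image_eqI)
  qed
qed

lemma Gam_unitary: "fock_unitary Gam"
  unfolding fock_unitary_def by (simp add: Gam_image Gam_lin Gam_norm)

lemma Gam_inj: "inj_on Gam fock_space"
  by (metis Hinv_Gam inj_onI)

lemma inv_Gam: "g \<in> fock_space \<Longrightarrow> inv_into fock_space Gam g = Hinv g"
  by (rule inv_into_f_eq[OF Gam_inj Hinv_fock]) simp_all

lemma Hinv_image: "Hinv ` fock_space = fock_space"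
proof
  show "Hinv ` fock_space \<subseteq> fock_space" using Hinv_fock by blast
  show "fock_space \<subseteq> Hinv ` fock_space"
  proof
    fix g assume "g \<in> fock_space"
    then show "g \<in> Hinv ` fock_space" using Gam_fock Hinv_Gam by (metis image_eqI)
  qed
qed

lemma inv_unitary: "fock_unitary (inv_into fock_space Gam)"
proof -
  have "inv_into fock_space Gam ` fock_space = Hinv ` fock_space"
    by (rule image_cong) (simp_all add: inv_Gam)
  then have i: "inv_into fock_space Gam ` fock_space = fock_space" using Hinv_image by simp
  show ?thesis unfolding fock_unitary_def
    by (simp add: i inv_Gam fock_lin Hinv_lin Hinv_norm Hinv_image)
qed

lemma basis_fock: assumes "finite m" "finite n" shows "basis_vec m n \<in> fock_space"
proof -
  have "(\<lambda>p. (cmod (basis_vec m n p))^2) summable_on {(m, n)}" by simp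
  then have "(\<lambda>p. (cmod (basis_vec m n p))^2) summable_on UNIV"
    by (rule summable_on_cong_neutral[THEN iffD1, rotated -1]) (auto simp: basis_vec_def)
  then show ?thesis using assms by (auto simp: fock_iff basis_vec_def)
qed

lemma vac_fock: "vac \<in> fock_space" unfolding vac_def by (rule basis_fock) simp_all

lemma zero_fock: "(\<lambda>p. 0) \<in> fock_space"
  unfolding fock_iff by simp

lemma Gam_basis: "Gam (basis_vec m n) = (\<lambda>q. eps (m, n) * basis_vec (bm m n) (cm m n) q)"
proof (rule all_sig)
  fix m' n'
  have "(sig (m', n') = (bm m n, cm m n)) = ((m', n') = (m, n))"
    using sig_inj[of "(m', n')" "(m, n)"] by (simp add: sig_pair)
  then show "Gam (basis_vec m n) (sig (m', n')) = eps (m, n) * basis_vec (bm m n) (cm m n) (sig (m', n'))"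
    by (auto simp: Gam_sig basis_vec_def)
qed

lemma ee_empty: "ee {} {} = 0" by (simp add: ee_def pc_def nc_def)

lemma bm_empty: "bm {} {} = {-1}" by (auto simp: bm_mem)
lemma cm_empty: "cm {} {} = {1}" by (auto simp: cm_mem)

lemma cnt0: "{i::int. i = a \<and> i < a} = {}" by auto

lemma vac_img: "bdag (-1) (cdag 1 vac) = basis_vec {-1} {1}"
proof (rule ext)
  fix p :: "int set \<times> int set"
  obtain M N where p: "p = (M, N)" by force
  have e1: "{i::int. i = -1 \<and> i < -1} = {}" "{i::int. i = 1 \<and> i < 1} = {}" by auto
  have e2: "{i::int. i \<in> {-1} \<and> i < -1} = {}" "{i::int. i \<in> {1} \<and> i < 1} = {}" by auto
  show "bdag (-1) (cdag 1 vac) p = basis_vec {-1} {1} p"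
    unfolding p
    using e1 e2 by (cases "M = {-1}"; cases "N = {1}")
       (auto simp: bdag_at cdag_at vac_def basis_vec_def cl_def cnt0)
qed

lemma Gam_vac: "Gam vac = bdag (-1) (cdag 1 vac)"
  unfolding vac_img by (simp add: vac_def Gam_basis eps_def ee_empty bm_empty cm_empty)

lemma Gam_rel: "gamma_relations Gam"
  unfolding gamma_relations_def
  using Gam_vac Rbdag Rbann Rcdag Rcann Rbdag0 Rbann0 Rcdag0 Rcann0 by simp




lemma U_zero: assumes U: "fock_unitary U" shows "U (\<lambda>p. 0) = (\<lambda>p. 0)"
proof -
  have lin: "\<forall>f\<in>fock_space. \<forall>g\<in>fock_space. \<forall>a. U (\<lambda>p. a * f p + g p) = (\<lambda>p. a * U f p + U g p)"
    using U unfolding fock_unitary_def by blast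
  have "U (\<lambda>p. 1 * 0 + 0) = (\<lambda>p. 1 * U (\<lambda>p. 0) p + U (\<lambda>p. 0) p)"
    using lin[rule_format, OF zero_fock zero_fock, of 1] by simp
  then show ?thesis by (simp add: fun_eq_iff)
qed

lemma U_scal: assumes U: "fock_unitary U" and h: "h \<in> fock_space"
  shows "U (\<lambda>p. c * h p) = (\<lambda>p. c * U h p)"
proof -
  have lin: "\<forall>f\<in>fock_space. \<forall>g\<in>fock_space. \<forall>a. U (\<lambda>p. a * f p + g p) = (\<lambda>p. a * U f p + U g p)"
    using U unfolding fock_unitary_def by blast
  have "U (\<lambda>p. c * h p + 0) = (\<lambda>p. c * U h p + U (\<lambda>p. 0) p)"
    using lin[rule_format, OF h zero_fock, of c] by simp
  then show ?thesis using U_zero[OF U] by simp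
qed

lemma U_bdag: assumes "gamma_relations U" "h \<in> fock_space"
  shows "U (bdag k h) = (if k = 0 then cann 1 (U h) else bdag (k - 1) (U h))"
  using assms unfolding gamma_relations_def by auto

lemma U_cdag: assumes "gamma_relations U" "h \<in> fock_space"
  shows "U (cdag k h) = (if k = 0 then bann (-1) (U h) else cdag (k + 1) (U h))"
  using assms unfolding gamma_relations_def by auto

lemma basis_ins_b: assumes "k \<notin> m"
  shows "basis_vec (insert k m) n = (\<lambda>p. (-1) ^ cl m k * bdag k (basis_vec m n) p)"
proof (rule ext)
  fix p :: "int set \<times> int set"
  obtain M N where p: "p = (M, N)" by force
  have "(k \<in> M \<and> M - {k} = m) \<longleftrightarrow> M = insert k m" using assms by auto
  moreover have "(-1::complex) ^ cl m k * (-1) ^ cl m k = 1" by (simp add: power_add[symmetric])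
  ultimately show "basis_vec (insert k m) n p = (-1) ^ cl m k * bdag k (basis_vec m n) p"
    unfolding p by (auto simp: bdag_at basis_vec_def)
qed

lemma basis_ins_c: assumes "k \<notin> n"
  shows "basis_vec {} (insert k n) = (\<lambda>p. (-1) ^ cl n k * cdag k (basis_vec {} n) p)"
proof (rule ext)
  fix p :: "int set \<times> int set"
  obtain M N where p: "p = (M, N)" by force
  have "(k \<in> N \<and> N - {k} = n) \<longleftrightarrow> N = insert k n" using assms by auto
  moreover have "(-1::complex) ^ cl n k * (-1) ^ cl n k = 1" by (simp add: power_add[symmetric])
  ultimately show "basis_vec {} (insert k n) p = (-1) ^ cl n k * cdag k (basis_vec {} n) p"
    unfolding p by (auto simp: cdag_at basis_vec_def)
qed

lemma U_basis:
  assumes U: "fock_unitary U" "gamma_relations U" and fm: "finite m" and fn: "finite n"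
  shows "U (basis_vec m n) = Gam (basis_vec m n)"
proof -
  have G: "fock_unitary Gam" "gamma_relations Gam" by (rule Gam_unitary, rule Gam_rel)
  have n0: "U (basis_vec {} n) = Gam (basis_vec {} n)" using fn
  proof (induction n rule: finite_induct)
    case empty
    have "U vac = Gam vac" using U(2) G(2) unfolding gamma_relations_def by simp
    then show ?case by (simp add: vac_def)
  next
    case (insert k n)
    have h: "basis_vec {} n \<in> fock_space" by (rule basis_fock) (simp_all add: insert)
    have c: "cdag k (basis_vec {} n) \<in> fock_space" by (rule cdag_fock[OF h])
    show ?case
      unfolding basis_ins_c[OF insert(2)]
      by (simp add: U_scal[OF U(1) c] U_scal[OF G(1) c] U_cdag[OF U(2) h] U_cdag[OF G(2) h] insert(3))
  qed
  show ?thesis using fm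
  proof (induction m rule: finite_induct)
    case empty
    then show ?case by (rule n0)
  next
    case (insert k m)
    have h: "basis_vec m n \<in> fock_space" by (rule basis_fock) (simp_all add: insert fn)
    have c: "bdag k (basis_vec m n) \<in> fock_space" by (rule bdag_fock[OF h])
    show ?case
      unfolding basis_ins_b[OF insert(2)]
      by (simp add: U_scal[OF U(1) c] U_scal[OF G(1) c] U_bdag[OF U(2) h] U_bdag[OF G(2) h] insert(3))
  qed
qed

lemma infsum_bump:
  fixes h :: fvec
  assumes s: "(\<lambda>p. (cmod (h p))^2) summable_on UNIV"
  shows "infsum (\<lambda>p. (cmod (c * basis_vec a b p + h p))^2) UNIV
       = infsum (\<lambda>p. (cmod (h p))^2) UNIV + ((cmod (c + h (a, b)))^2 - (cmod (h (a, b)))^2)"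
proof -
  define D where "D = (cmod (c + h (a, b)))^2 - (cmod (h (a, b)))^2"
  have e: "(\<lambda>p. (cmod (c * basis_vec a b p + h p))^2) = (\<lambda>p. (cmod (h p))^2 + (if p = (a, b) then D else 0))"
    by (auto simp: fun_eq_iff basis_vec_def D_def)
  have s2: "(\<lambda>p. if p = (a, b) then D else 0) summable_on UNIV"
    by (rule summable_on_cong_neutral[where S="{(a,b)}", THEN iffD1]) auto
  have i2: "infsum (\<lambda>p. if p = (a, b) then D else 0) UNIV = infsum (\<lambda>p. D) {(a, b)}"
    by (rule infsum_cong_neutral) auto
  have "infsum (\<lambda>p. (cmod (h p))^2 + (if p = (a, b) then D else 0)) UNIV
     = infsum (\<lambda>p. (cmod (h p))^2) UNIV + infsum (\<lambda>p. if p = (a, b) then D else 0) UNIV"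
    by (rule infsum_add[OF s s2])
  then show ?thesis unfolding e i2 by (simp add: D_def)
qed

lemma coord:
  assumes U: "fock_unitary U" and f: "f \<in> fock_space" and fr: "finite (fst r)" "finite (snd r)"
    and Ub: "U (basis_vec (fst r) (snd r)) = (\<lambda>p. \<epsilon> * basis_vec (fst q) (snd q) p)"
    and eps1: "\<epsilon> = 1 \<or> \<epsilon> = -1"
  shows "U f q = \<epsilon> * f r"
proof -
  have bf: "basis_vec (fst r) (snd r) \<in> fock_space" using basis_fock fr by blast
  have sf: "(\<lambda>p. (cmod (f p))^2) summable_on UNIV" using f by (simp add: fock_iff)
  have Uf: "U f \<in> fock_space" using U f unfolding fock_unitary_def by blast
  have sUf: "(\<lambda>p. (cmod (U f p))^2) summable_on UNIV" using Uf by (simp add: fock_iff)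
  have nf: "infsum (\<lambda>p. (cmod (U f p))^2) UNIV = infsum (\<lambda>p. (cmod (f p))^2) UNIV"
    using U f unfolding fock_unitary_def fock_norm_def by simp
  have key: "(cmod (c * \<epsilon> + U f q))^2 - (cmod (U f q))^2 = (cmod (c + f r))^2 - (cmod (f r))^2" for c
  proof -
    have l: "U (\<lambda>p. c * basis_vec (fst r) (snd r) p + f p) = (\<lambda>p. (c * \<epsilon>) * basis_vec (fst q) (snd q) p + U f p)"
      using U bf f Ub unfolding fock_unitary_def by (simp add: mult.assoc)
    have "fock_norm (U (\<lambda>p. c * basis_vec (fst r) (snd r) p + f p)) = fock_norm (\<lambda>p. c * basis_vec (fst r) (snd r) p + f p)"
      using U fock_lin[OF bf f] unfolding fock_unitary_def by blast
    then have "infsum (\<lambda>p. (cmod ((c * \<epsilon>) * basis_vec (fst q) (snd q) p + U f p))^2) UNIV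
       = infsum (\<lambda>p. (cmod (c * basis_vec (fst r) (snd r) p + f p))^2) UNIV"
      unfolding l fock_norm_def by simp
    then show ?thesis unfolding infsum_bump[OF sUf] infsum_bump[OF sf] nf by simp
  qed
  have k1: "(cmod (\<epsilon> + U f q))^2 - (cmod (U f q))^2 = (cmod (1 + f r))^2 - (cmod (f r))^2"
    using key[of 1] by simp
  have k2: "(cmod (\<i> * \<epsilon> + U f q))^2 - (cmod (U f q))^2 = (cmod (\<i> + f r))^2 - (cmod (f r))^2"
    using key[of "\<i>"] by simp
  from eps1 show ?thesis
  proof
    assume e: "\<epsilon> = 1"
    have "Re (U f q) = Re (f r)" "Im (U f q) = Im (f r)"
      using k1 k2 unfolding e cmod_power2 by (simp_all add: power2_eq_square algebra_simps)
    then show ?thesis using e by (simp add: complex_eqI)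
  next
    assume e: "\<epsilon> = -1"
    have "Re (U f q) = - Re (f r)" "Im (U f q) = - Im (f r)"
      using k1 k2 unfolding e cmod_power2 by (simp_all add: power2_eq_square algebra_simps)
    then show ?thesis using e by (simp add: complex_eqI)
  qed
qed

lemma eps_pm: "eps p = 1 \<or> eps p = -1"
  by (simp add: eps_def) (metis neg_one_even_power neg_one_odd_power)

lemma unique:
  assumes U: "fock_unitary U" "gamma_relations U" and f: "f \<in> fock_space"
  shows "U f = Gam f"
proof (rule all_sig)
  fix m n
  have Uf: "U f \<in> fock_space" using U f unfolding fock_unitary_def by blast
  show "U f (sig (m, n)) = Gam f (sig (m, n))"
  proof (cases "finite m \<and> finite n")
    case True
    have b: "U (basis_vec (fst (m, n)) (snd (m, n))) = (\<lambda>p. eps (m, n) * basis_vec (fst (sig (m, n))) (snd (sig (m, n))) p)"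
      using U_basis[OF U] True by (simp add: Gam_basis sig_pair)
    show ?thesis using coord[OF U(1) f _ _ b eps_pm] True by (simp add: Gam_sig)
  next
    case False
    then have "f (m, n) = 0" using fock_fin[OF f] by blast
    moreover have "U f (sig (m, n)) = 0"
      using fock_fin[OF Uf, of "bm m n" "cm m n"] False by (auto simp: sig_pair)
    ultimately show ?thesis by (simp add: Gam_sig)
  qed
qed




lemma card_bm_cm: assumes "finite m" "finite n"
  shows "card (bm m n) = card (cm m n) \<longleftrightarrow> card m = card n"
proof -
  have a: "card (bm m n) = card {i\<in>m. i \<noteq> 0} + (if 0 \<notin> n then 1 else 0)"
    using card_bm[OF assms(1), of n "\<lambda>_. True"] by simp
  have b: "card (cm m n) = card {i\<in>n. i \<noteq> 0} + (if 0 \<notin> m then 1 else 0)"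
    using card_cm[OF assms(2), of m "\<lambda>_. True"] by simp
  have c: "card m = card {i\<in>m. i \<noteq> 0} + (if 0 \<in> m then 1 else 0)"
    using card_pt[OF assms(1), of "\<lambda>_. True" 0] by simp
  have d: "card n = card {i\<in>n. i \<noteq> 0} + (if 0 \<in> n then 1 else 0)"
    using card_pt[OF assms(2), of "\<lambda>_. True" 0] by simp
  show ?thesis unfolding a b c d by (cases "0 \<in> m"; cases "0 \<in> n"; simp)
qed

lemma zc_iff: "f \<in> zero_charge \<longleftrightarrow> f \<in> fock_space \<and> (\<forall>m n. f (m, n) \<noteq> 0 \<longrightarrow> card m = card n)"
  by (simp add: zero_charge_def)

lemma Gam_zc: assumes f: "f \<in> zero_charge" shows "Gam f \<in> zero_charge"
proof -
  have ff: "f \<in> fock_space" using f by (simp add: zc_iff)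
  have "Gam f q \<noteq> 0 \<longrightarrow> card (fst q) = card (snd q)" for q
  proof
    assume "Gam f q \<noteq> 0"
    obtain m n where t: "tau q = (m, n)" by force
    have q: "q = sig (m, n)" by (metis sig_tau t)
    have "f (m, n) \<noteq> 0" using \<open>Gam f q \<noteq> 0\<close> by (simp add: Gam_def t)
    then have "finite m" "finite n" "card m = card n" using f fock_fin[OF ff] by (auto simp: zc_iff)
    then show "card (fst q) = card (snd q)" using card_bm_cm by (simp add: q sig_pair)
  qed
  then show ?thesis using Gam_fock[OF ff] by (auto simp: zc_iff)
qed

lemma Hinv_zc: assumes f: "f \<in> zero_charge" shows "Hinv f \<in> zero_charge"
proof -
  have ff: "f \<in> fock_space" using f by (simp add: zc_iff)
  have "Hinv f (m, n) \<noteq> 0 \<longrightarrow> card m = card n" for m n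
  proof
    assume "Hinv f (m, n) \<noteq> 0"
    then have nz: "f (bm m n, cm m n) \<noteq> 0" by (simp add: Hinv_def sig_pair)
    have fin: "finite m \<and> finite n" using fock_fin[OF ff nz] by simp
    have "card (bm m n) = card (cm m n)" using f nz by (simp add: zc_iff)
    then show "card m = card n" using card_bm_cm fin by simp
  qed
  then show ?thesis using Hinv_fock[OF ff] by (auto simp: zc_iff)
qed

lemma Gam_zc_image: "Gam ` zero_charge = zero_charge"
proof
  show "Gam ` zero_charge \<subseteq> zero_charge" using Gam_zc by blast
  show "zero_charge \<subseteq> Gam ` zero_charge"
  proof
    fix g assume "g \<in> zero_charge"
    then show "g \<in> Gam ` zero_charge" using Hinv_zc Gam_Hinv by (metis image_eqI)
  qed
qed

lemma bann_bdag: "bann k (bdag k h) = (\<lambda>(M, N). if k \<notin> M then h (M, N) else 0)"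
proof (rule ext)
  fix p :: "int set \<times> int set"
  obtain M N where p: "p = (M, N)" by force
  have "(-1::complex) ^ cl M k * (-1) ^ cl M k = 1" by (simp add: power_add[symmetric])
  then show "bann k (bdag k h) p = (\<lambda>(M, N). if k \<notin> M then h (M, N) else 0) p"
    unfolding p by (auto simp: bann_at bdag_at mult.assoc[symmetric])
qed

lemma cann_cdag: "cann k (cdag k h) = (\<lambda>(M, N). if k \<notin> N then h (M, N) else 0)"
proof (rule ext)
  fix p :: "int set \<times> int set"
  obtain M N where p: "p = (M, N)" by force
  have "(-1::complex) ^ (card M + cl N k) * (-1) ^ (card M + cl N k) = 1" by (simp add: power_add[symmetric])
  then show "cann k (cdag k h) p = (\<lambda>(M, N). if k \<notin> N then h (M, N) else 0) p"
    unfolding p by (auto simp: cann_at cdag_at mult.assoc[symmetric])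
qed

lemma omega_pos_fock: "omega_pos k \<in> fock_space"
  by (induction k) (simp_all add: vac_fock bdag_fock cdag_fock)
lemma omega_neg_fock: "omega_neg k \<in> fock_space"
  by (induction k) (simp_all add: vac_fock bdag_fock cdag_fock)

lemma Gam_pos: "Gam (omega_pos (Suc k)) = omega_pos k"
proof (induction k)
  case 0
  have c: "cdag 0 vac \<in> fock_space" by (rule cdag_fock[OF vac_fock])
  have "Gam (bdag 0 (cdag 0 vac)) = cann 1 (bann (-1) (bdag (-1) (cdag 1 vac)))"
    using Rbdag0[OF c] Rcdag0[OF vac_fock] Gam_vac by simp
  also have "\<dots> = vac"
  proof (rule ext)
    fix p :: "int set \<times> int set"
    obtain M N where p: "p = (M, N)" by force
    show "cann 1 (bann (-1) (bdag (-1) (cdag 1 vac))) p = vac p"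
      unfolding p bann_bdag
      by (auto simp: cann_at cdag_at vac_def basis_vec_def)
  qed
  finally show ?case by simp
next
  case (Suc k)
  have h: "omega_pos (Suc k) \<in> fock_space" by (rule omega_pos_fock)
  have c: "cdag (- int (Suc k)) (omega_pos (Suc k)) \<in> fock_space" by (rule cdag_fock[OF h])
  have "Gam (omega_pos (Suc (Suc k))) = bdag (int (Suc k) - 1) (cdag (- int (Suc k) + 1) (Gam (omega_pos (Suc k))))"
    using Rbdag[OF c, of "int (Suc k)"] Rcdag[OF h, of "- int (Suc k)"] by simp
  then show ?case using Suc by simp
qed

lemma Gam_neg: "Gam (omega_neg k) = omega_neg (Suc k)"
proof (induction k)
  case 0
  then show ?case by (simp add: Gam_vac)
next
  case (Suc k)
  have h: "omega_neg k \<in> fock_space" by (rule omega_neg_fock)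
  have c: "cdag (int (Suc k)) (omega_neg k) \<in> fock_space" by (rule cdag_fock[OF h])
  have "Gam (omega_neg (Suc k)) = bdag (- int (Suc k) - 1) (cdag (int (Suc k) + 1) (Gam (omega_neg k)))"
    using Rbdag[OF c, of "- int (Suc k)"] Rcdag[OF h, of "int (Suc k)"] by simp
  then show ?case using Suc by simp
qed

lemma Omega_fock: "Omega P \<in> fock_space"
  by (simp add: Omega_def omega_pos_fock omega_neg_fock)

lemma Gam_Omega: "Gam (Omega P) = Omega (P - 1)"
proof (cases "P \<ge> 1")
  case True
  then have "nat P = Suc (nat (P - 1))" by simp
  then show ?thesis using True Gam_pos[of "nat (P - 1)"] by (simp add: Omega_def)
next
  case False
  then have "nat (- (P - 1)) = Suc (nat (- P))" by simp
  moreover have "Omega P = omega_neg (nat (- P))"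
    using False by (cases "P = 0") (simp_all add: Omega_def)
  ultimately show ?thesis using False Gam_neg[of "nat (- P)"] by (simp add: Omega_def)
qed

lemma Hinv_Omega: "inv_into fock_space Gam (Omega P) = Omega (P + 1)"
proof -
  have "Omega P = Gam (Omega (P + 1))" using Gam_Omega[of "P + 1"] by simp
  then show ?thesis by (metis Hinv_Gam Omega_fock inv_Gam)
qed

lemma inv_rel:
  assumes X: "X f \<in> fock_space" and f: "f \<in> fock_space"
    and R: "Gam (Y (Hinv f)) = X (Gam (Hinv f))"
  shows "inv_into fock_space Gam (X f) = Y (inv_into fock_space Gam f)"
proof -
  have "inv_into fock_space Gam (X f) = Hinv (X f)" by (rule inv_Gam[OF X])
  also have "\<dots> = Hinv (Gam (Y (Hinv f)))" using R by simp
  also have "\<dots> = Y (Hinv f)" by simp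
  finally show ?thesis using inv_Gam[OF f] by simp
qed

lemma Gam_inv_rel: "gamma_inv_relations (inv_into fock_space Gam)"
proof -
  have v: "inv_into fock_space Gam vac = bdag 0 (cdag 0 vac)"
    using Hinv_Omega[of 0] by (simp add: Omega_def)
  have A: "\<forall>n. \<forall>f\<in>fock_space. n \<noteq> -1 \<longrightarrow>
        inv_into fock_space Gam (bann n f) = bann (n + 1) (inv_into fock_space Gam f)
      \<and> inv_into fock_space Gam (bdag n f) = bdag (n + 1) (inv_into fock_space Gam f)"
  proof (intro allI ballI impI conjI)
    fix n :: int and f assume f: "f \<in> fock_space" and n: "n \<noteq> -1"
    have n1: "n + 1 \<noteq> 0" using n by simp
    have hf: "Hinv f \<in> fock_space" by (rule Hinv_fock[OF f])
    show "inv_into fock_space Gam (bann n f) = bann (n + 1) (inv_into fock_space Gam f)"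
      by (rule inv_rel[where X="bann n" and Y="bann (n + 1)", OF bann_fock[OF f] f]) (simp add: Rbann[OF hf n1])
    show "inv_into fock_space Gam (bdag n f) = bdag (n + 1) (inv_into fock_space Gam f)"
      by (rule inv_rel[where X="bdag n" and Y="bdag (n + 1)", OF bdag_fock[OF f] f]) (simp add: Rbdag[OF hf n1])
  qed
  have B: "\<forall>n. \<forall>f\<in>fock_space. n \<noteq> 1 \<longrightarrow>
        inv_into fock_space Gam (cann n f) = cann (n - 1) (inv_into fock_space Gam f)
      \<and> inv_into fock_space Gam (cdag n f) = cdag (n - 1) (inv_into fock_space Gam f)"
  proof (intro allI ballI impI conjI)
    fix n :: int and f assume f: "f \<in> fock_space" and n: "n \<noteq> 1"
    have n1: "n - 1 \<noteq> 0" using n by simp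
    have hf: "Hinv f \<in> fock_space" by (rule Hinv_fock[OF f])
    show "inv_into fock_space Gam (cann n f) = cann (n - 1) (inv_into fock_space Gam f)"
      by (rule inv_rel[where X="cann n" and Y="cann (n - 1)", OF cann_fock[OF f] f]) (simp add: Rcann[OF hf n1])
    show "inv_into fock_space Gam (cdag n f) = cdag (n - 1) (inv_into fock_space Gam f)"
      by (rule inv_rel[where X="cdag n" and Y="cdag (n - 1)", OF cdag_fock[OF f] f]) (simp add: Rcdag[OF hf n1])
  qed
  have C: "\<forall>f\<in>fock_space.
        inv_into fock_space Gam (cdag 1 f) = bann 0 (inv_into fock_space Gam f)
      \<and> inv_into fock_space Gam (bdag (-1) f) = cann 0 (inv_into fock_space Gam f)
      \<and> inv_into fock_space Gam (cann 1 f) = bdag 0 (inv_into fock_space Gam f)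
      \<and> inv_into fock_space Gam (bann (-1) f) = cdag 0 (inv_into fock_space Gam f)"
  proof (intro ballI conjI)
    fix f assume f: "f \<in> fock_space"
    have hf: "Hinv f \<in> fock_space" by (rule Hinv_fock[OF f])
    show "inv_into fock_space Gam (cdag 1 f) = bann 0 (inv_into fock_space Gam f)"
      by (rule inv_rel[where X="cdag 1" and Y="bann 0", OF cdag_fock[OF f] f]) (simp add: Rbann0[OF hf])
    show "inv_into fock_space Gam (bdag (-1) f) = cann 0 (inv_into fock_space Gam f)"
      by (rule inv_rel[where X="bdag (-1)" and Y="cann 0", OF bdag_fock[OF f] f]) (simp add: Rcann0[OF hf])
    show "inv_into fock_space Gam (cann 1 f) = bdag 0 (inv_into fock_space Gam f)"
      by (rule inv_rel[where X="cann 1" and Y="bdag 0", OF cann_fock[OF f] f]) (simp add: Rbdag0[OF hf])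
    show "inv_into fock_space Gam (bann (-1) f) = cdag 0 (inv_into fock_space Gam f)"
      by (rule inv_rel[where X="bann (-1)" and Y="cdag 0", OF bann_fock[OF f] f]) (simp add: Rcdag0[OF hf])
  qed
  show ?thesis unfolding gamma_inv_relations_def using v A B C by blast
qed

theorem lemma2:
  shows "\<exists>G. fock_unitary G \<and> gamma_relations G
     \<and> (\<forall>G'. fock_unitary G' \<and> gamma_relations G' \<longrightarrow> (\<forall>f\<in>fock_space. G' f = G f))
     \<and> G ` zero_charge = zero_charge
     \<and> fock_unitary (inv_into fock_space G)
     \<and> (\<forall>P. G (Omega P) = Omega (P - 1) \<and> inv_into fock_space G (Omega P) = Omega (P + 1))
     \<and> gamma_inv_relations (inv_into fock_space G)"
  apply (rule exI[of _ Gam])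
  using Gam_unitary Gam_rel unique Gam_zc_image inv_unitary Gam_Omega Hinv_Omega Gam_inv_rel
  by blast


end
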